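(* A family of structures $\mathfrak{K}=\{\mathcal{A}_i:i\in\mathbb{N}\}$ is $\mathbf{Fin}$-learnable if and only if it is $=_{\mathbb{N}}$-learnable.
   Context: All structures are countable, have domain $\mathbb{N}$, are in a finite relational signature, and are identified with their atomic diagrams (elements of $2^{\mathbb{N}}$ via a fixed Gödel numbering). A family of structures $\mathfrak{K}$ is a countable set of pairwise nonisomorphic such structures. For a structure $\mathcal{S}$ and $s\in\mathbb{N}$, $\mathcal{S}\restriction_s$ denotes the finite substructure with domain $\{0,\dots,s\}$. The learning domain $\mathrm{LD}(\mathfrak{K})\subseteq 2^{\mathbb{N}}$ is the set of all structures with domain $\mathbb{N}$ isomorphic to some member of $\mathfrak{K}$, with the subspace topology of Cantor space. The hypothesis space is $\{\ulcorner\mathcal{A}\urcorner:\mathcal{A}\in\mathfrak{K}\}\cup\{?\}$ (pairwise distinct formal symbols). A learner is an arbitrary function $\mathbf{M}$ from $\{\mathcal{S}\restriction_s:\mathcal{S}\in\mathrm{LD}(\mathfrak{K}),s\in\mathbb{N}\}$ to the hypothesis space. $\mathfrak{K}$ is $\mathbf{Fin}$-learnable if there is a learner $\mathbf{M}$ such that for every $\mathcal{S}\in\mathrm{LD}(\mathfrak{K})$ there is $s_0$ with $\mathbf{M}(\mathcal{S}\restriction_t)=?$ for all $t<s_0$ and $\mathbf{M}(\mathcal{S}\restriction_t)=\ulcorner\mathcal{A}\urcorner$ for all $t\geq s_0$, where $\mathcal{A}\in\mathfrak{K}$ is isomorphic to $\mathcal{S}$. For an equivalence relation $E$ on a space $X$,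 $\mathfrak{K}$ is $E$-learnable if there is a continuous function $\Gamma:\mathrm{LD}(\mathfrak{K})\to X$ such that for all $\mathcal{S},\mathcal{S}'\in\mathrm{LD}(\mathfrak{K})$: $\mathcal{S}\cong\mathcal{S}'\iff\Gamma(\mathcal{S})\,E\,\Gamma(\mathcal{S}')$. Here $=_{\mathbb{N}}$ is equality on $\mathbb{N}$ with the discrete topology. *)

theory Defs
  imports "HOL-Analysis.Analysis" "HOL-Library.Countable"
begin

text \<open>A finite relational signature is a list of arities: relation symbol i (for i < length sig)
  has arity sig ! i.  A structure with domain the natural numbers is given by the
  interpretations of its relation symbols: S i xs says that tuple xs lies in the relation R_i.\<close>

type_synonym str = "nat \<Rightarrow> nat list \<Rightarrow> bool"

definition is_str :: "nat list \<Rightarrow> str \<Rightarrow> bool" where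
  "is_str sig S \<longleftrightarrow> (\<forall>i xs. S i xs \<longrightarrow> i < length sig \<and> length xs = sig ! i)"

definition iso :: "str \<Rightarrow> str \<Rightarrow> bool" where
  "iso S T \<longleftrightarrow> (\<exists>f. bij f \<and> (\<forall>i xs. S i xs \<longleftrightarrow> T i (map f xs)))"

datatype atom = AEq nat nat | ARel nat "nat list"

instance atom :: countable by countable_datatype

definition is_atom :: "nat list \<Rightarrow> atom \<Rightarrow> bool" where
  "is_atom sig a = (case a of AEq x y \<Rightarrow> True
                    | ARel i xs \<Rightarrow> i < length sig \<and> length xs = sig ! i)"

fun holds :: "str \<Rightarrow> atom \<Rightarrow> bool" where
  "holds S (AEq x y) = (x = y)"
| "holds S (ARel i xs) = S i xs"

text \<open>The atomic diagram of S as an element of Cantor space 2^N: bit n is the truth value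
  of the atomic sentence with Goedel number n (from_nat is onto the atoms).\<close>
definition diag :: "nat list \<Rightarrow> str \<Rightarrow> (nat \<Rightarrow> bool)" where
  "diag sig S n = (is_atom sig (from_nat n) \<and> holds S (from_nat n))"

definition cantor :: "(nat \<Rightarrow> bool) topology" where
  "cantor = product_topology (\<lambda>_. discrete_topology UNIV) UNIV"

definition family :: "nat list \<Rightarrow> str set \<Rightarrow> bool" where
  "family sig K \<longleftrightarrow> countable K \<and> (\<forall>A\<in>K. is_str sig A)
     \<and> (\<forall>A\<in>K. \<forall>B\<in>K. iso A B \<longrightarrow> A = B)"

definition LD :: "nat list \<Rightarrow> str set \<Rightarrow> str set" where
  "LD sig K = {S. is_str sig S \<and> (\<exists>A\<in>K. iso A S)}"

definition restr :: "str \<Rightarrow> nat \<Rightarrow> nat \<times> str" where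
  "restr S s = (s, \<lambda>i xs. S i xs \<and> (\<forall>x\<in>set xs. x \<le> s))"

text \<open>Hypotheses: None is ?, Some A is the code of A \<in> K.\<close>
definition Fin_learnable :: "nat list \<Rightarrow> str set \<Rightarrow> bool" where
  "Fin_learnable sig K \<longleftrightarrow>
     (\<exists>M :: nat \<times> str \<Rightarrow> str option.
        (\<forall>s S. S \<in> LD sig K \<longrightarrow> M (restr S s) = None \<or> (\<exists>A\<in>K. M (restr S s) = Some A)) \<and>
        (\<forall>S \<in> LD sig K. \<exists>s0. (\<forall>t<s0. M (restr S t) = None) \<and>
            (\<exists>A\<in>K. iso A S \<and> (\<forall>t\<ge>s0. M (restr S t) = Some A))))"

definition eqN_learnable :: "nat list \<Rightarrow> str set \<Rightarrow> bool" where
  "eqN_learnable sig K \<longleftrightarrow>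
     (\<exists>\<Gamma> :: (nat \<Rightarrow> bool) \<Rightarrow> nat.
        continuous_map (subtopology cantor (diag sig ` LD sig K)) (discrete_topology UNIV) \<Gamma> \<and>
        (\<forall>S\<in>LD sig K. \<forall>S'\<in>LD sig K. iso S S' \<longleftrightarrow> \<Gamma> (diag sig S) = \<Gamma> (diag sig S')))"

end

theory Submission imports Defs begin

lemma cont_local:
  assumes c: "continuous_map (subtopology cantor D) (discrete_topology UNIV) (G :: (nat \<Rightarrow> bool) \<Rightarrow> nat)"
    and d: "d \<in> D"
  shows "\<exists>F. finite F \<and> (\<forall>e\<in>D. (\<forall>n\<in>F. e n = d n) \<longrightarrow> G e = G d)"
proof -
  have "openin (subtopology cantor D) {x \<in> topspace (subtopology cantor D). G x \<in> {G d}}"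
    using c unfolding continuous_map_def by (meson openin_discrete_topology subset_UNIV)
  moreover have "topspace (subtopology cantor D) = D" by (simp add: cantor_def)
  ultimately have "openin (subtopology cantor D) {x \<in> D. G x = G d}" by (simp add: cantor_def)
  then obtain U where U: "openin cantor U" "{x \<in> D. G x = G d} = U \<inter> D"
    by (auto simp: openin_subtopology)
  have "d \<in> U" using U(2) d by blast
  then obtain V where V: "finite {i. V i \<noteq> UNIV}" "d \<in> Pi\<^sub>E UNIV V" "Pi\<^sub>E UNIV V \<subseteq> U"
    using U(1) unfolding cantor_def openin_product_topology_alt by fastforce
  show ?thesis
  proof (intro exI conjI ballI impI)
    show "finite {i. V i \<noteq> UNIV}" by (fact V(1))
    fix e assume e: "e \<in> D" "\<forall>n\<in>{i. V i \<noteq> UNIV}. e n = d n"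
    have "e \<in> Pi\<^sub>E UNIV V"
    proof -
      have "e i \<in> V i" for i
        using e(2) V(2) by (cases "V i = UNIV") auto
      then show ?thesis by auto
    qed
    then have "e \<in> U" using V(3) by blast
    then show "G e = G d" using U(2) e(1) by blast
  qed
qed

lemma local_cont:
  assumes "\<And>d. d \<in> D \<Longrightarrow> \<exists>F. finite F \<and> (\<forall>e\<in>D. (\<forall>n\<in>F. e n = d n) \<longrightarrow> (G::(nat \<Rightarrow> bool) \<Rightarrow> nat) e = G d)"
  shows "continuous_map (subtopology cantor D) (discrete_topology UNIV) G"
proof -
  have ts: "topspace (subtopology cantor D) = D" by (simp add: cantor_def)
  have "openin (subtopology cantor D) {x \<in> D. G x \<in> W}" for W
  proof (subst openin_subopen, intro ballI)
    fix d assume dd: "d \<in> {x \<in> D. G x \<in> W}"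
    then obtain F where F: "finite F" "\<forall>e\<in>D. (\<forall>n\<in>F. e n = d n) \<longrightarrow> G e = G d"
      using assms by blast
    define V where "V = (\<lambda>n. if n \<in> F then {d n} else (UNIV::bool set))"
    have "openin cantor (Pi\<^sub>E UNIV V)"
      unfolding cantor_def
      by (rule product_topology_basis) (auto simp: V_def intro: finite_subset[OF _ F(1)])
    then have "openin (subtopology cantor D) (Pi\<^sub>E UNIV V \<inter> D)"
      by (auto simp: openin_subtopology)
    moreover have "d \<in> Pi\<^sub>E UNIV V \<inter> D" using dd by (auto simp: V_def)
    moreover have "Pi\<^sub>E UNIV V \<inter> D \<subseteq> {x \<in> D. G x \<in> W}"
      using F(2) dd by (auto simp: V_def PiE_iff split: if_splits)
    ultimately show "\<exists>T. openin (subtopology cantor D) T \<and> d \<in> T \<and> T \<subseteq> {x \<in> D. G x \<in> W}"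
      by blast
  qed
  then show ?thesis unfolding continuous_map_def ts by auto
qed


lemma iso_refl: "iso S S"
  unfolding iso_def by (rule exI[of _ id]) (simp)

lemma iso_sym: assumes "iso S T" shows "iso T S"
proof -
  obtain f where f: "bij f" "\<forall>i xs. S i xs \<longleftrightarrow> T i (map f xs)" using assms iso_def by blast
  have "T i ys \<longleftrightarrow> S i (map (inv f) ys)" for i ys
    using f by (simp add: bij_is_surj surj_f_inv_f comp_def)
  then show ?thesis unfolding iso_def using bij_imp_bij_inv[OF f(1)] by blast
qed

lemma iso_trans: assumes "iso S T" "iso T U" shows "iso S U"
proof -
  obtain f where f: "bij f" "\<forall>i xs. S i xs \<longleftrightarrow> T i (map f xs)" using assms iso_def by blast
  obtain g where g: "bij g" "\<forall>i xs. T i xs \<longleftrightarrow> U i (map g xs)" using assms iso_def by blast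
  have "S i xs \<longleftrightarrow> U i (map (g \<circ> f) xs)" for i xs using f g by simp
  then show ?thesis unfolding iso_def using bij_comp[OF f(1) g(1)] by blast
qed

lemma fam_uniq: assumes "family sig K" "A \<in> K" "B \<in> K" "iso A S" "iso B S" shows "A = B"
  using assms unfolding family_def by (meson iso_sym iso_trans)

lemma restr_eq: "restr T s = restr S s \<longleftrightarrow> (\<forall>i xs. (\<forall>x\<in>set xs. x \<le> s) \<longrightarrow> (T i xs \<longleftrightarrow> S i xs))"
  unfolding restr_def by (auto simp: fun_eq_iff)

fun vars :: "atom \<Rightarrow> nat set" where
  "vars (AEq x y) = {x, y}" | "vars (ARel i xs) = set xs"

lemma diag_agree:
  assumes "restr T s = restr S s" "\<forall>x\<in>vars (from_nat n). x \<le> s"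
  shows "diag sig T n = diag sig S n"
  using assms unfolding diag_def restr_eq by (cases "from_nat n :: atom") auto

definition Fs :: "nat list \<Rightarrow> nat \<Rightarrow> nat set" where
  "Fs sig s = to_nat ` (\<Union>i<length sig. ARel i ` {xs. set xs \<subseteq> {..s} \<and> length xs \<le> sig!i})"

lemma finite_Fs: "finite (Fs sig s)"
  unfolding Fs_def by (intro finite_imageI finite_UN_I finite_lists_length_le) auto

lemma restr_of_diag_half:
  assumes "is_str sig T" "\<forall>n\<in>Fs sig s. diag sig T n = diag sig S n"
    "\<forall>x\<in>set xs. x \<le> s" "T i xs"
  shows "S i xs"
proof -
  have il: "i < length sig" "length xs = sig ! i" using assms(1,4) is_str_def by auto
  have "to_nat (ARel i xs) \<in> Fs sig s" unfolding Fs_def using il assms(3) by (intro imageI UN_I[of i]) auto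
  then have "diag sig T (to_nat (ARel i xs)) = diag sig S (to_nat (ARel i xs))" using assms(2) by blast
  then show ?thesis using il assms(4) by (simp add: diag_def is_atom_def)
qed

lemma restr_of_diag:
  assumes "is_str sig T" "is_str sig S" "\<forall>n\<in>Fs sig s. diag sig T n = diag sig S n"
  shows "restr T s = restr S s"
  unfolding restr_eq using restr_of_diag_half[OF assms(1,3)] restr_of_diag_half[OF assms(2)] assms(3)
  by metis

lemma diag_inj:
  assumes "is_str sig T" "is_str sig S" "diag sig T = diag sig S"
  shows "T = S"
proof -
  have "T i xs = S i xs" for i xs
    using restr_of_diag[OF assms(1,2), of "Max (insert 0 (set xs))"] assms(3)
    unfolding restr_eq by (metis Max_ge finite_insert finite_set insertCI)
  then show ?thesis by (simp add: fun_eq_iff)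
qed


lemma LD_self: "A \<in> K \<Longrightarrow> family sig K \<Longrightarrow> A \<in> LD sig K"
  unfolding LD_def family_def using iso_refl by auto

lemma Fin_imp_eqN:
  assumes fam: "family sig K" and fin: "Fin_learnable sig K"
  shows "eqN_learnable sig K"
proof -
  obtain M :: "nat \<times> str \<Rightarrow> str option" where
    M2: "\<forall>S \<in> LD sig K. \<exists>s0. (\<forall>t<s0. M (restr S t) = None) \<and>
            (\<exists>A\<in>K. iso A S \<and> (\<forall>t\<ge>s0. M (restr S t) = Some A))"
    using fin unfolding Fin_learnable_def by (elim exE conjE) (rule that)
  define G where "G d = to_nat_on K (SOME A. A\<in>K \<and> (\<exists>S\<in>LD sig K. diag sig S = d \<and> iso A S))" for d
  have key: "G (diag sig S) = to_nat_on K A" if S: "S \<in> LD sig K" and A: "A \<in> K" "iso A S" for S A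
  proof -
    have "\<exists>A. A\<in>K \<and> (\<exists>S'\<in>LD sig K. diag sig S' = diag sig S \<and> iso A S')" using S A by blast
    then have "(SOME A. A\<in>K \<and> (\<exists>S'\<in>LD sig K. diag sig S' = diag sig S \<and> iso A S')) \<in> K \<and>
       (\<exists>S'\<in>LD sig K. diag sig S' = diag sig S \<and> iso (SOME A. A\<in>K \<and> (\<exists>S'\<in>LD sig K. diag sig S' = diag sig S \<and> iso A S')) S')"
      by (rule someI_ex)
    then obtain S' where S': "S' \<in> LD sig K" "diag sig S' = diag sig S"
      "iso (SOME A. A\<in>K \<and> (\<exists>S'\<in>LD sig K. diag sig S' = diag sig S \<and> iso A S')) S'"
      "(SOME A. A\<in>K \<and> (\<exists>S'\<in>LD sig K. diag sig S' = diag sig S \<and> iso A S')) \<in> K" by blast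
    have "is_str sig S'" "is_str sig S" using S'(1) S unfolding LD_def by auto
    then have "S' = S" using S'(2) by (rule diag_inj)
    then have "(SOME A. A\<in>K \<and> (\<exists>S'\<in>LD sig K. diag sig S' = diag sig S \<and> iso A S')) = A"
      using fam_uniq[OF fam S'(4) A(1)] S'(3) A(2) by simp
    then show ?thesis unfolding G_def by simp
  qed
  have lda: "\<exists>A\<in>K. iso A S" if "S \<in> LD sig K" for S using that unfolding LD_def by simp
  have cnt: "countable K" using fam unfolding family_def by (elim conjE)
  have isoG: "iso S S' \<longleftrightarrow> G (diag sig S) = G (diag sig S')"
    if SS: "S \<in> LD sig K" "S' \<in> LD sig K" for S S'
  proof -
    obtain A where A: "A \<in> K" "iso A S" using lda[OF SS(1)] by blast
    obtain A' where A': "A' \<in> K" "iso A' S'" using lda[OF SS(2)] by blast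
    have "iso S S' \<longleftrightarrow> A = A'"
    proof
      assume "iso S S'"
      then have "iso A S'" using iso_trans[OF A(2)] by blast
      then show "A = A'" using fam_uniq[OF fam A(1) A'(1) _ A'(2)] by blast
    next
      assume "A = A'"
      then show "iso S S'" using iso_trans[OF iso_sym[OF A(2)]] A'(2) by simp
    qed
    also have "\<dots> \<longleftrightarrow> to_nat_on K A = to_nat_on K A'"
      using inj_on_to_nat_on[OF cnt] A(1) A'(1) by (auto dest: inj_onD)
    finally show ?thesis using key[OF SS(1) A] key[OF SS(2) A'] by simp
  qed
  have cont: "continuous_map (subtopology cantor (diag sig ` LD sig K)) (discrete_topology UNIV) G"
  proof (rule local_cont)
    fix d assume "d \<in> diag sig ` LD sig K"
    then obtain S where S: "S \<in> LD sig K" "d = diag sig S" by blast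
    obtain s0 A where sA: "A\<in>K" "iso A S" "\<forall>t\<ge>s0. M (restr S t) = Some A"
      using M2 S(1) by blast
    show "\<exists>F. finite F \<and> (\<forall>e\<in>diag sig ` LD sig K. (\<forall>n\<in>F. e n = d n) \<longrightarrow> G e = G d)"
    proof (intro exI conjI ballI impI)
      show "finite (Fs sig s0)" by (rule finite_Fs)
      fix e assume e: "e \<in> diag sig ` LD sig K" "\<forall>n\<in>Fs sig s0. e n = d n"
      then obtain T where T: "T \<in> LD sig K" "e = diag sig T" by blast
      have "restr T s0 = restr S s0"
      proof (rule restr_of_diag)
        show "is_str sig T" "is_str sig S" using T(1) S(1) unfolding LD_def by auto
        show "\<forall>n\<in>Fs sig s0. diag sig T n = diag sig S n" using e(2) T(2) S(2) by simp
      qed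
      then have MT: "M (restr T s0) = Some A" using sA(3) by simp
      obtain s1 A' where tA: "\<forall>t<s1. M (restr T t) = None" "A'\<in>K" "iso A' T" "\<forall>t\<ge>s1. M (restr T t) = Some A'"
        using M2 T(1) by blast
      have "s1 \<le> s0" proof (rule ccontr)
        assume "\<not> s1 \<le> s0"
        then have "M (restr T s0) = None" using tA(1) by simp
        then show False using MT by simp
      qed
      then have "A' = A" using tA(4) MT by auto
      then show "G e = G d" using key[OF T(1) sA(1)] key[OF S(1) sA(1,2)] tA(3) T(2) S(2) by simp
    qed
  qed
  show ?thesis unfolding eqN_learnable_def by (intro exI[of _ G] conjI cont ballI isoG)
qed

lemma eqN_imp_Fin:
  assumes fam: "family sig K" and eq: "eqN_learnable sig K"
  shows "Fin_learnable sig K"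
proof -
  obtain G :: "(nat \<Rightarrow> bool) \<Rightarrow> nat" where
    cont: "continuous_map (subtopology cantor (diag sig ` LD sig K)) (discrete_topology UNIV) G" and
    isoG: "\<forall>S\<in>LD sig K. \<forall>S'\<in>LD sig K. iso S S' \<longleftrightarrow> G (diag sig S) = G (diag sig S')"
    using eq unfolding eqN_learnable_def by blast
  define good where "good \<sigma> A \<longleftrightarrow> A\<in>K \<and> (\<exists>T\<in>LD sig K. restr T (fst \<sigma>) = \<sigma>) \<and>
      (\<forall>T\<in>LD sig K. restr T (fst \<sigma>) = \<sigma> \<longrightarrow> iso A T)" for \<sigma> :: "nat \<times> str" and A
  define M where "M \<sigma> = (if \<exists>A. good \<sigma> A then Some (SOME A. good \<sigma> A) else None)" for \<sigma>
  have fst_restr: "fst (restr S s) = s" for S s by (simp add: restr_def)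
  have Mgood: "good \<sigma> B" if h: "M \<sigma> = Some B" for \<sigma> B
  proof -
    have ex: "\<exists>A. good \<sigma> A" using h unfolding M_def by (auto split: if_splits)
    then have "good \<sigma> (SOME A. good \<sigma> A)" by (rule someI_ex)
    moreover have "B = (SOME A. good \<sigma> A)" using h ex unfolding M_def by simp
    ultimately show ?thesis by simp
  qed
  have C1: "\<forall>s S. S \<in> LD sig K \<longrightarrow> M (restr S s) = None \<or> (\<exists>A\<in>K. M (restr S s) = Some A)"
  proof (intro allI impI)
    fix s S show "M (restr S s) = None \<or> (\<exists>A\<in>K. M (restr S s) = Some A)"
      using Mgood[of "restr S s"] unfolding good_def by (cases "M (restr S s)") auto
  qed
  have C2: "\<exists>s0. (\<forall>t<s0. M (restr S t) = None) \<and>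
            (\<exists>A\<in>K. iso A S \<and> (\<forall>t\<ge>s0. M (restr S t) = Some A))" if S: "S \<in> LD sig K" for S
  proof -
    obtain A where A: "A \<in> K" "iso A S" using S LD_def by blast
    obtain F where F: "finite F" "\<forall>e\<in>diag sig ` LD sig K. (\<forall>n\<in>F. e n = diag sig S n) \<longrightarrow> G e = G (diag sig S)"
      using cont_local[OF cont] S by blast
    define s where "s = Max (insert 0 (\<Union>n\<in>F. vars (from_nat n)))"
    have fin: "finite (insert 0 (\<Union>n\<in>F. vars (from_nat n)))"
    proof -
      have "finite (vars a)" for a by (cases a) auto
      then show ?thesis using F(1) by auto
    qed
    have uniq: "B = A" if g: "good (restr S t) B" for t B
    proof -
      have "B \<in> K" "iso B S" using g S unfolding good_def fst_restr by auto
      then show "B = A" using fam_uniq[OF fam _ A(1) _ A(2)] by blast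
    qed
    have gmono: "good (restr S t) A" if "good (restr S t0) A" "t0 \<le> t" for t0 t
      using that S unfolding good_def fst_restr restr_eq by (meson order_trans)
    have Ps: "good (restr S s) A"
      unfolding good_def fst_restr
    proof (intro conjI ballI impI)
      show "A \<in> K" by fact
      show "\<exists>T\<in>LD sig K. restr T s = restr S s" using S by blast
      fix T assume T: "T \<in> LD sig K" "restr T s = restr S s"
      have "\<forall>n\<in>F. diag sig T n = diag sig S n"
      proof
        fix n assume "n \<in> F"
        then have "\<forall>x\<in>vars (from_nat n). x \<le> s" unfolding s_def using fin \<open>n \<in> F\<close> by (auto intro!: Max_ge)
        then show "diag sig T n = diag sig S n" using diag_agree T(2) by blast
      qed
      then have "G (diag sig T) = G (diag sig S)" using F(2) T(1) by blast
      then have "iso T S" using isoG T(1) S by blast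
      then show "iso A T" using A(2) iso_sym iso_trans by blast
    qed
    define s0 where "s0 = (LEAST t. good (restr S t) A)"
    have g0: "good (restr S s0)  A" unfolding s0_def using Ps by (rule LeastI)
    show ?thesis
    proof (intro exI conjI allI impI bexI)
      fix t assume "t < s0"
      then have "\<not> good (restr S t) A" unfolding s0_def using not_less_Least by blast
      then show "M (restr S t) = None" using uniq unfolding M_def by auto
    next
      fix t assume "s0 \<le> t"
      then have g: "good (restr S t) A" using gmono g0 by blast
      then have "good (restr S t) (SOME B. good (restr S t) B)" by (rule someI[of _ A])
      then show "M (restr S t) = Some A" unfolding M_def using g uniq by auto
    qed (use A in auto)
  qed
  show ?thesis unfolding Fin_learnable_def using C1 C2 by blast
qed

theorem mainTheorem3:
  fixes sig :: "nat list" and K :: "str set"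
  assumes "family sig K"
  shows "Fin_learnable sig K \<longleftrightarrow> eqN_learnable sig K"
  using Fin_imp_eqN eqN_imp_Fin assms by blast

end
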